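(* Let $K\ge 2$, let $f:\mathbb{R}^3\to\mathbb{R}^K$ be an arbitrary function, and let $\mathbf{p}_1,\mathbf{p}_2\in\mathbb{R}^3$ with $\mathbf{u}_1=f(\mathbf{p}_1)$ and $\mathbf{u}_2=f(\mathbf{p}_2)$ satisfying $\min^{(1)}(\mathbf{u}_i)+\min^{(2)}(\mathbf{u}_i)\ge 0$ for $i=1,2$. Then for every $\alpha\in[0,1]$, the linearly interpolated vector $\mathbf{u}_\alpha=\alpha\mathbf{u}_1+(1-\alpha)\mathbf{u}_2$ (associated with the point $\alpha\mathbf{p}_1+(1-\alpha)\mathbf{p}_2$ on the segment joining $\mathbf{p}_1$ and $\mathbf{p}_2$) also satisfies $\min^{(1)}(\mathbf{u}_\alpha)+\min^{(2)}(\mathbf{u}_\alpha)\ge 0$.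
   Context: For a vector $\mathbf{u}\in\mathbb{R}^K$, $\min^{(n)}(\mathbf{u})$ denotes the $n$-th smallest entry of $\mathbf{u}$ (counted with multiplicity). *)

theory Defs
  imports "HOL-Analysis.Analysis" "HOL-Library.Multiset"
begin

text \<open>n-th smallest entry (1-indexed, counted with multiplicity) of a vector.\<close>
definition nth_min :: "nat \<Rightarrow> real ^ 'k \<Rightarrow> real" where
  "nth_min n u = sorted_list_of_multiset (image_mset (\<lambda>i. u $ i) (mset_set (UNIV :: 'k set))) ! (n - 1)"

end

theory Submission
  imports Defs
begin

lemma sorted_two_le:
  fixes L :: "real list"
  assumes "sorted L" "length L \<ge> 2" "{#a, b#} \<subseteq># mset L"
  shows "L!0 + L!1 \<le> a + b"
proof -
  obtain x y r where L: "L = x # y # r"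
    using assms(2) by (cases L; cases "tl L") auto
  have xy: "x \<le> y" and xr: "\<forall>z\<in>set r. x \<le> z" and yr: "\<forall>z\<in>set r. y \<le> z"
    using assms(1) L by auto
  have aL: "a \<in> set L" and bL: "b \<in> set L" using assms(3)
    by (metis insert_subset set_mset_add_mset_insert set_mset_mono set_mset_mset)+
  have ax: "a \<ge> x" and bx: "b \<ge> x" using aL bL L xy xr by auto
  show ?thesis
  proof (cases "a < y")
    case True
    then have "a = x" using aL L yr by auto
    then have "{#b#} \<subseteq># mset (y # r)" using assms(3) L
      by (simp add: add_mset_commute)
    then have "b \<ge> y" using yr by auto
    then show ?thesis using L \<open>a = x\<close> by simp
  next
    case False
    show ?thesis
    proof (cases "b < y")
      case True
      then have "b = x" using bL L yr by auto
      then have "{#a#} \<subseteq># mset (y # r)" using assms(3) L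
        by (simp add: add_mset_commute)
      then have "a \<ge> y" using yr by auto
      then show ?thesis using L \<open>b = x\<close> by simp
    next
      case False
      then show ?thesis using \<open>\<not> a < y\<close> L xy by simp
    qed
  qed
qed

lemma nth_min_pair:
  fixes u :: "real ^ 'k"
  assumes "CARD('k) \<ge> 2"
  shows "(\<exists>i j. i \<noteq> j \<and> nth_min 1 u + nth_min 2 u = u$i + u$j)
       \<and> (\<forall>i j. i \<noteq> j \<longrightarrow> nth_min 1 u + nth_min 2 u \<le> u$i + u$j)"
proof -
  define M where "M = image_mset (\<lambda>i. u $ i) (mset_set (UNIV :: 'k set))"
  define L where "L = sorted_list_of_multiset M"
  have mL: "mset L = M" unfolding L_def by simp
  have sL: "sorted L" unfolding L_def by simp
  have lenL: "length L \<ge> 2" using assms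
  proof -
    have "length L = size M" using mL by (metis size_mset)
    also have "size M = CARD('k)" unfolding M_def by simp
    finally show ?thesis using assms by simp
  qed
  have nm: "nth_min 1 u + nth_min 2 u = L!0 + L!1"
    unfolding nth_min_def L_def M_def by simp
  obtain x y r where L: "L = x # y # r"
    using lenL by (cases L; cases "tl L") auto
  have part1: "\<exists>i j. i \<noteq> j \<and> nth_min 1 u + nth_min 2 u = u$i + u$j"
  proof -
    have "x \<in># M" using mL[symmetric] L by simp
    then obtain i where i: "x = u$i" unfolding M_def by auto
    have "M - {#x#} = image_mset (\<lambda>i. u $ i) (mset_set (UNIV - {i}))"
      unfolding M_def i by (simp add: mset_set_Diff image_mset_Diff)
    moreover have "y \<in># M - {#x#}" proof -
      have "M - {#x#} = add_mset y (mset r)" using mL L by auto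
      then show ?thesis by simp
    qed
    ultimately obtain j where j: "y = u$j" "j \<noteq> i" by auto
    show ?thesis proof -
      have "L!0 = x" "L!1 = y" using L by simp_all
      then have "nth_min 1 u + nth_min 2 u = u$i + u$j" using nm i j by simp
      then show ?thesis using j(2) by (intro exI[of _ i] exI[of _ j]) simp
    qed
  qed
  have part2: "\<forall>i j. i \<noteq> j \<longrightarrow> nth_min 1 u + nth_min 2 u \<le> u$i + u$j"
  proof (intro allI impI)
    fix i j :: 'k assume ij: "i \<noteq> j"
    have "mset_set (UNIV :: 'k set) = {#i, j#} + mset_set (UNIV - {i, j})"
    proof -
      have "mset_set (UNIV :: 'k set) = add_mset i (mset_set (UNIV - {i}))"
        by (metis finite mset_set.remove UNIV_I)
      moreover have "mset_set (UNIV - {i} :: 'k set) = add_mset j (mset_set (UNIV - {i} - {j}))"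
        using ij by (simp add: mset_set.remove)
      ultimately show ?thesis by (simp add: Diff_insert2 [symmetric] insert_commute)
    qed
    then have "{#u$i, u$j#} \<subseteq># M" unfolding M_def by simp
    then show "nth_min 1 u + nth_min 2 u \<le> u$i + u$j"
      using sorted_two_le[OF sL lenL] mL nm by simp
  qed
  show ?thesis using part1 part2 by blast
qed

theorem theorem2:
  fixes f :: "real ^ 3 \<Rightarrow> real ^ 'k"
    and p1 p2 :: "real ^ 3"
    and u1 u2 :: "real ^ 'k"
  assumes "CARD('k) \<ge> 2"
    and "u1 = f p1" and "u2 = f p2"
    and "nth_min 1 u1 + nth_min 2 u1 \<ge> 0"
    and "nth_min 1 u2 + nth_min 2 u2 \<ge> 0"
  shows "\<forall>\<alpha>\<in>{0..1::real}.
           nth_min 1 (\<alpha> *\<^sub>R u1 + (1 - \<alpha>) *\<^sub>R u2) + nth_min 2 (\<alpha> *\<^sub>R u1 + (1 - \<alpha>) *\<^sub>R u2) \<ge> 0"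
proof
  fix a :: real assume a: "a \<in> {0..1}"
  define v where "v = a *\<^sub>R u1 + (1 - a) *\<^sub>R u2"
  obtain i j where ij: "i \<noteq> j" "nth_min 1 v + nth_min 2 v = v$i + v$j"
    using nth_min_pair[OF assms(1), of v] by blast
  have h1: "u1$i + u1$j \<ge> 0" using nth_min_pair[OF assms(1), of u1] ij(1) assms(4) by force
  have h2: "u2$i + u2$j \<ge> 0" using nth_min_pair[OF assms(1), of u2] ij(1) assms(5) by force
  have "v$i + v$j = a * (u1$i + u1$j) + (1 - a) * (u2$i + u2$j)"
    unfolding v_def by (simp add: algebra_simps)
  also have "\<dots> \<ge> 0" proof -
    have "a * (u1$i + u1$j) \<ge> 0" using a h1 by simp
    moreover have "(1 - a) * (u2$i + u2$j) \<ge> 0" using a h2 by simp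
    ultimately show ?thesis by linarith
  qed
  finally show "nth_min 1 v + nth_min 2 v \<ge> 0" using ij(2) by simp
qed

end
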